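(* Let $x_\circ$ be the unique solution of $\Psi_{6.74}(x)=x$ in $[\frac38,\frac12]$. Then $\Phi_3(6.74,x_\circ)>0$.
   Context: $\Psi_d=\dot\Psi\circ\hat\Psi$ with $\hat\Psi(x)=\frac{1-2x^{2}}{1-x^{2}}$, $\dot\Psi(v)=\frac{1-v^{d-1}}{2-v^{d-1}}$; $\Phi_3(d,x)=-\log(1-x)-d(\frac23-d^{-1})\log(1-2x^3)+(d-1)\log(1-x^{2})$. (Existence and uniqueness of $x_\circ$ is known.) *)

theory Defs
  imports Complex_Main
begin

definition Psi_hat :: "real \<Rightarrow> real" where
  "Psi_hat x = (1 - 2 * x^2) / (1 - x^2)"

definition Psi_dot :: "real \<Rightarrow> real \<Rightarrow> real" where
  "Psi_dot d v = (1 - v powr (d - 1)) / (2 - v powr (d - 1))"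

definition Psi :: "real \<Rightarrow> real \<Rightarrow> real" where
  "Psi d = Psi_dot d \<circ> Psi_hat"

definition Phi3 :: "real \<Rightarrow> real \<Rightarrow> real" where
  "Phi3 d x = - ln (1 - x) - d * (2/3 - 1/d) * ln (1 - 2 * x^3) + (d - 1) * ln (1 - x^2)"

end

theory Submission
  imports Defs "HOL-Analysis.Analysis"
begin

lemma ln_bounds:
  fixes x :: real and n :: nat
  assumes x: "1 \<le> x"
  shows "(\<Sum>k<n. 2*((x-1)/(x+1))^(2*k+1)/(2*k+1)) \<le> ln x"
    and "ln x \<le> (\<Sum>k<n. 2*((x-1)/(x+1))^(2*k+1)/(2*k+1)) + 2*((x-1)/(x+1))^(2*n+1)/((2*n+1)*(1-((x-1)/(x+1))^2))"
proof -
  define y where "y = (x-1)/(x+1)"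
  have y0: "0 \<le> y" and y1: "y < 1" using x by (auto simp: y_def field_simps)
  have y2: "y^2 < 1" using y0 y1 by (simp add: power_less_one_iff)
  let ?f = "\<lambda>k. 2*y^(2*k+1)/real(2*k+1)"
  have sums: "?f sums ln x" using ln_series_quadratic[of x] x by (simp add: y_def)
  have tail: "(\<lambda>k. ?f (k + n)) sums (ln x - (\<Sum>k<n. ?f k))"
    using sums_split_initial_segment[OF sums, of n] by simp
  have "0 \<le> ln x - (\<Sum>k<n. ?f k)"
    by (rule sums_le[OF _ sums_zero tail]) (simp add: y0)
  then show "(\<Sum>k<n. 2*((x-1)/(x+1))^(2*k+1)/(2*k+1)) \<le> ln x" by (simp add: y_def)
  have geo: "(\<lambda>k. 2*y^(2*n+1)/real(2*n+1) * (y^2)^k) sums (2*y^(2*n+1)/real(2*n+1) * (1/(1-y^2)))"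
    by (intro sums_mult geometric_sums) (use y0 y2 in simp)
  have le: "?f (k+n) \<le> 2*y^(2*n+1)/real(2*n+1) * (y^2)^k" for k
  proof -
    have "?f (k+n) = 2*y^(2*n+1) * (y^2)^k / real(2*(k+n)+1)"
      by (simp add: power_mult[symmetric] power_add[symmetric] algebra_simps)
    also have "\<dots> \<le> 2*y^(2*n+1) * (y^2)^k / real(2*n+1)"
      by (rule divide_left_mono) (use y0 in auto)
    finally show ?thesis by simp
  qed
  have "ln x - (\<Sum>k<n. ?f k) \<le> 2*y^(2*n+1)/real(2*n+1) * (1/(1-y^2))"
    by (rule sums_le[OF _ tail geo]) (rule le)
  then show "ln x \<le> (\<Sum>k<n. 2*((x-1)/(x+1))^(2*k+1)/(2*k+1)) + 2*((x-1)/(x+1))^(2*n+1)/((2*n+1)*(1-((x-1)/(x+1))^2))"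
  proof -
    have e: "2*y^(2*n+1)/real(2*n+1) * (1/(1-y^2)) = 2*y^(2*n+1)/((2*n+1)*(1-y^2))" by simp
    show ?thesis using \<open>ln x - _ \<le> _\<close> unfolding e by (simp add: y_def)
  qed
qed

lemma ln_two_lo: "0.693147180 \<le> ln (2::real)"
  using ln_bounds(1)[of "2" 11] by (simp add: eval_nat_numeral)

lemma ln_two_hi: "ln (2::real) \<le> 0.693147181"
  using ln_bounds(2)[of "2" 11] by (simp add: eval_nat_numeral)

lemma ln_A1_lo: "0.178691788 \<le> ln (55/46::real)"
  using ln_bounds(1)[of "55/46" 5] by (simp add: eval_nat_numeral)

lemma ln_B1_hi: "ln (61/44::real) \<le> 0.326684231"
  using ln_bounds(2)[of "61/44" 6] by (simp add: eval_nat_numeral)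

lemma ln_A2_lo: "0.197700441 \<le> ln (8479/6958::real)"
  using ln_bounds(1)[of "8479/6958" 5] by (simp add: eval_nat_numeral)

lemma ln_B2_hi: "ln (3/2::real) \<le> 0.405465109"
  using ln_bounds(2)[of "3/2" 7] by (simp add: eval_nat_numeral)

lemma ln_Va_lo: "0.286425856 \<le> ln (133165943/100000000::real)"
  using ln_bounds(1)[of "133165943/100000000" 6] by (simp add: eval_nat_numeral)

lemma ln_Ra_hi: "ln (276731/213848::real) \<le> 0.257780433"
  using ln_bounds(2)[of "276731/213848" 6] by (simp add: eval_nat_numeral)

lemma ln_Vb_hi: "ln (66583343/50000000::real) \<le> 0.286431436"
  using ln_bounds(2)[of "66583343/50000000" 6] by (simp add: eval_nat_numeral)

lemma ln_Rb_lo: "0.257831128 \<le> ln (553459/427672::real)"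
  using ln_bounds(1)[of "553459/427672" 6] by (simp add: eval_nat_numeral)

lemma ln_P1_lo: "0.591562183 \<le> ln (500000/276731::real)"
  using ln_bounds(1)[of "500000/276731" 9] by (simp add: eval_nat_numeral)

lemma ln_P2_lo: "0.196107278 \<le> ln (60832871/50000000::real)"
  using ln_bounds(1)[of "60832871/50000000" 5] by (simp add: eval_nat_numeral)

lemma ln_P3_hi: "ln (3903317/3125000::real) \<le> 0.222392422"
  using ln_bounds(2)[of "3903317/3125000" 5] by (simp add: eval_nat_numeral)


definition hh :: "real \<Rightarrow> real" where
  "hh x = 287/50 * (ln (1 - 2*x^2) - ln (1 - x^2)) - (ln (1 - 2*x) - ln (1 - x))"

lemma ln_recip: "0 < (z::real) \<Longrightarrow> ln (1/z) = - ln z"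
  by (simp add: ln_div)

lemma sq_lt: assumes "0 \<le> x" "x < (1/2::real)" shows "x^2 < 1/4"
proof -
  have "x^2 = x*x" by (simp add: power2_eq_square)
  also have "\<dots> \<le> x*(1/2)" using assms by (intro mult_left_mono) auto
  also have "\<dots> < 1/4" using assms by auto
  finally show ?thesis .
qed

lemma hh_alt:
  assumes "0 \<le> x" "x < 1/2"
  shows "hh x = 287/50 * ln (Psi_hat x) - ln ((1-2*x)/(1-x))"
proof -
  have x2: "x^2 < 1/4" using sq_lt assms by blast
  then have "0 < 1 - 2*x^2" "0 < 1 - x^2" "0 < 1 - 2*x" "0 < 1-x" using assms by auto
  then show ?thesis unfolding hh_def Psi_hat_def by (simp add: ln_divide_pos)
qed

lemma Psi_hat_pos:
  assumes "0 \<le> x" "x < 1/2"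
  shows "0 < Psi_hat x" "Psi_hat x \<le> 1"
proof -
  have x2: "x^2 < 1/4" using sq_lt assms by blast
  then have a: "0 < 1 - 2*x^2" "0 < 1 - x^2" by auto
  then show "0 < Psi_hat x" unfolding Psi_hat_def by simp
  show "Psi_hat x \<le> 1" unfolding Psi_hat_def using a by simp
qed

lemma fix_iff:
  assumes "0 \<le> x" "x < 1/2"
  shows "Psi 6.74 x = x \<longleftrightarrow> hh x = 0"
proof -
  define v where "v = Psi_hat x"
  have v: "0 < v" "v \<le> 1" using Psi_hat_pos[OF assms] by (auto simp: v_def)
  define w where "w = exp (287/50 * ln v)"
  have w: "0 < w" by (simp add: w_def)
  have w1: "w \<le> 1" unfolding w_def using v by (simp add: mult_nonneg_nonpos)
  have P: "Psi 6.74 x = (1 - w)/(2 - w)"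
    unfolding Psi_def Psi_dot_def comp_def w_def v_def[symmetric] using v
    by (simp add: powr_def)
  have r: "0 < (1-2*x)/(1-x)" using assms by simp
  have "Psi 6.74 x = x \<longleftrightarrow> 1 - w = x * (2 - w)"
    unfolding P using w1 by (simp add: field_simps)
  also have "\<dots> \<longleftrightarrow> w = (1-2*x)/(1-x)"
    using assms by (auto simp: field_simps)
  also have "\<dots> \<longleftrightarrow> ln w = ln ((1-2*x)/(1-x))"
    using w r by simp
  also have "\<dots> \<longleftrightarrow> hh x = 0"
    unfolding hh_alt[OF assms] w_def v_def by simp
  finally show ?thesis .
qed

lemma not_half: "Psi 6.74 (1/2) \<noteq> 1/2"
proof
  assume h: "Psi 6.74 (1/2) = 1/2"
  define v where "v = Psi_hat (1/2)"
  have v: "v = 2/3" by (simp add: v_def Psi_hat_def power2_eq_square)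
  define w where "w = exp (287/50 * ln v)"
  have w: "0 < w" by (simp add: w_def)
  have w1: "w \<le> 1" unfolding w_def using v by (simp add: mult_nonneg_nonpos)
  have P: "Psi 6.74 (1/2) = (1 - w)/(2 - w)"
    unfolding Psi_def Psi_dot_def comp_def w_def v_def[symmetric] using v
    by (simp add: powr_def)
  from h[unfolded P] w1 have "2*(1-w) = 2 - w" by (simp add: field_simps)
  with w show False by simp
qed

lemma neg1:
  assumes "3/8 \<le> x" "x \<le> 39/100"
  shows "hh x < 0"
proof -
  have x0: "0 \<le> x" "x < 1/2" using assms by auto
  have x2: "x^2 < 1/4" using sq_lt x0 by blast
  have "(3/8)^2 \<le> x^2" using assms by (intro power_mono) auto
  then have x2': "9/64 \<le> x^2" by (simp add: power_divide)
  have pv: "0 < Psi_hat x" using Psi_hat_pos[OF x0] by simp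
  have "Psi_hat x \<le> 46/55" unfolding Psi_hat_def using x2 x2' by (simp add: field_simps)
  then have "ln (Psi_hat x) \<le> ln (1/(55/46))" using pv by simp
  then have L1: "ln (Psi_hat x) \<le> - 0.178691788" using ln_A1_lo ln_recip[of "55/46"] by simp
  have "1/(2*(61/44)) \<le> (1-2*x)/(1-x)" using assms by (simp add: field_simps)
  then have "ln (1/(2*(61/44))) \<le> ln ((1-2*x)/(1-x))" using assms
    by (subst ln_le_cancel_iff) auto
  moreover have "ln (1/(2*(61/44))) = - (ln 2 + ln (61/44::real))"
    using ln_recip[of "2*(61/44)"] ln_mult[of 2 "61/44::real"] by simp
  ultimately have L2: "- (0.693147181 + 0.326684231) \<le> ln ((1-2*x)/(1-x))"
    using ln_two_hi ln_B1_hi by linarith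
  show ?thesis unfolding hh_alt[OF x0] using L1 L2 by simp
qed

lemma neg2:
  assumes "39/100 \<le> x" "x \<le> 2/5"
  shows "hh x < 0"
proof -
  have x0: "0 \<le> x" "x < 1/2" using assms by auto
  have x2: "x^2 < 1/4" using sq_lt x0 by blast
  have "(39/100)^2 \<le> x^2" using assms by (intro power_mono) auto
  then have x2': "1521/10000 \<le> x^2" by (simp add: power_divide)
  have pv: "0 < Psi_hat x" using Psi_hat_pos[OF x0] by simp
  have "Psi_hat x \<le> 6958/8479" unfolding Psi_hat_def using x2 x2' by (simp add: field_simps)
  then have "ln (Psi_hat x) \<le> ln (1/(8479/6958))" using pv by simp
  then have L1: "ln (Psi_hat x) \<le> - 0.197700441" using ln_A2_lo ln_recip[of "8479/6958"] by simp
  have "1/(2*(3/2)) \<le> (1-2*x)/(1-x)" using assms by (simp add: field_simps)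
  then have "ln (1/(2*(3/2))) \<le> ln ((1-2*x)/(1-x))" using assms
    by (subst ln_le_cancel_iff) auto
  moreover have "ln (1/(2*(3/2))) = - (ln 2 + ln (3/2::real))"
    using ln_recip[of "2*(3/2)"] ln_mult[of 2 "3/2::real"] by simp
  ultimately have L2: "- (0.693147181 + 0.405465109) \<le> ln ((1-2*x)/(1-x))"
    using ln_two_hi ln_B2_hi by linarith
  show ?thesis unfolding hh_alt[OF x0] using L1 L2 by simp
qed

lemma hh_a: "hh 0.446538 < 0"
proof -
  have x0: "0 \<le> (0.446538::real)" "(0.446538::real) < 1/2" by auto
  have pa: "Psi_hat 0.446538 = 1/(200150953639/150301907278)"
    by (simp add: Psi_hat_def power2_eq_square)
  have "0.286425856 \<le> ln (200150953639/150301907278::real)"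
    by (rule order_trans[OF ln_Va_lo]) simp
  then have L1: "ln (Psi_hat 0.446538) \<le> - 0.286425856"
    unfolding pa using ln_recip[of "200150953639/150301907278"] by simp
  have ra: "(1 - 2*0.446538)/(1 - 0.446538) = 1/(2*(2*(276731/213848::real)))" by simp
  have "ln (1/(2*(2*(276731/213848::real)))) = - (ln 2 + (ln 2 + ln (276731/213848)))"
    using ln_recip[of "2*(2*(276731/213848::real))"] ln_mult[of 2 "2*(276731/213848::real)"]
      ln_mult[of 2 "276731/213848::real"] by simp
  then have L2: "- (0.693147181 + (0.693147181 + 0.257780433)) \<le> ln ((1 - 2*0.446538)/(1 - 0.446538::real))"
    unfolding ra using ln_two_hi ln_Ra_hi by linarith
  show ?thesis unfolding hh_alt[OF x0] using L1 L2 by simp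
qed

lemma hh_b: "0 < hh 0.446541"
proof -
  have x0: "0 \<le> (0.446541::real)" "(0.446541::real) < 1/2" by auto
  have pa: "Psi_hat 0.446541 = 1/(800601135319/601202270638)"
    by (simp add: Psi_hat_def power2_eq_square)
  have "ln (800601135319/601202270638::real) \<le> 0.286431436"
    by (rule order_trans[OF _ ln_Vb_hi]) simp
  then have L1: "- 0.286431436 \<le> ln (Psi_hat 0.446541)"
    unfolding pa using ln_recip[of "800601135319/601202270638"] by simp
  have ra: "(1 - 2*0.446541)/(1 - 0.446541) = 1/(2*(2*(553459/427672::real)))" by simp
  have "ln (1/(2*(2*(553459/427672::real)))) = - (ln 2 + (ln 2 + ln (553459/427672)))"
    using ln_recip[of "2*(2*(553459/427672::real))"] ln_mult[of 2 "2*(553459/427672::real)"]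
      ln_mult[of 2 "553459/427672::real"] by simp
  then have L2: "ln ((1 - 2*0.446541)/(1 - 0.446541::real)) \<le> - (0.693147180 + (0.693147180 + 0.257831128))"
    unfolding ra using ln_two_lo ln_Rb_lo by linarith
  show ?thesis unfolding hh_alt[OF x0] using L1 L2 by simp
qed

definition pp :: "real \<Rightarrow> real" where
  "pp x = (1+x)*(1-2*x^2) - 2*(287/50)*x*(1-2*x)"

lemma pp_pos: assumes "2/5 \<le> x" "x \<le> 1/2" shows "0 < pp x"
proof -
  define t where "t = x - 2/5"
  have t: "0 \<le> t" "t \<le> 1/10" using assms by (auto simp: t_def)
  have t2: "0 \<le> t^2" by simp
  have t3: "t^3 \<le> t^2 / 10"
  proof -
    have "t^3 = t^2 * t" by (simp add: power3_eq_cube power2_eq_square)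
    also have "\<dots> \<le> t^2 * (1/10)" using t by (intro mult_left_mono) auto
    finally show ?thesis by simp
  qed
  have "pp x = 21/625 + 666/125*t + 464/25*t^2 - 2*t^3"
    unfolding pp_def t_def by (simp add: power3_eq_cube power2_eq_square field_simps)
  then show ?thesis using t t2 t3 by linarith
qed

lemma alg_id:
  fixes x A B C D :: real
  assumes n: "A \<noteq> 0" "B \<noteq> 0" "C \<noteq> 0" "D \<noteq> 0"
    and e: "A = 1 - 2*x^2" "B = 1 - x" "C = 1 - 2*x" "D = 1 + x"
  shows "287/50*(-4*x/A - -2*x/(B*D)) - (-2/C - -1/B)
     = (D*A - 2*(287/50)*x*C) / (B*C*D*A)"
  using n apply (simp add: field_simps)
  unfolding e by (simp add: power2_eq_square algebra_simps)

lemma hh_deriv: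
  assumes "0 \<le> x" "x < 1/2"
  shows "(hh has_real_derivative (pp x / ((1-x)*(1-2*x)*(1+x)*(1-2*x^2)))) (at x)"
proof -
  have x2: "x^2 < 1/4" using sq_lt assms by blast
  then have a: "0 < 1 - 2*x^2" "0 < 1 - x^2" "0 < 1 - 2*x" "0 < 1-x" "0 < 1+x" using assms by auto
  have d1: "((\<lambda>x. ln (1 - 2*x^2)) has_real_derivative (-4*x/(1-2*x^2))) (at x)"
    using a by (auto intro!: derivative_eq_intros)
  have d2: "((\<lambda>x. ln (1 - x^2)) has_real_derivative (-2*x/(1-x^2))) (at x)"
    using a by (auto intro!: derivative_eq_intros)
  have d3: "((\<lambda>x. ln (1 - 2*x)) has_real_derivative (-2/(1-2*x))) (at x)"
    using a by (auto intro!: derivative_eq_intros)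
  have d4: "((\<lambda>x. ln (1 - x)) has_real_derivative (-1/(1-x))) (at x)"
    using a by (auto intro!: derivative_eq_intros)
  have D: "(hh has_real_derivative (287/50*(-4*x/(1-2*x^2) - -2*x/(1-x^2)) - (-2/(1-2*x) - -1/(1-x)))) (at x)"
    unfolding hh_def[abs_def] by (intro DERIV_diff DERIV_cmult d1 d2 d3 d4)
  have e: "1 - x^2 = (1-x)*(1+x)" by (simp add: power2_eq_square algebra_simps)
  have "287/50*(-4*x/(1-2*x^2) - -2*x/(1-x^2)) - (-2/(1-2*x) - -1/(1-x))
     = pp x / ((1-x)*(1-2*x)*(1+x)*(1-2*x^2))"
    unfolding e pp_def using a by (subst alg_id[of "1-2*x^2" "1-x" "1-2*x" "1+x" x]) auto
  with D show ?thesis by simp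
qed

lemma hh_deriv_pos:
  assumes "2/5 \<le> x" "x < 1/2"
  shows "0 < pp x / ((1-x)*(1-2*x)*(1+x)*(1-2*x^2))"
proof -
  have x2: "x^2 < 1/4" using sq_lt assms by auto
  then have a: "0 < 1 - 2*x^2" "0 < 1 - 2*x" "0 < 1-x" "0 < 1+x" using assms by auto
  have "0 < pp x" using pp_pos assms by auto
  with a show ?thesis by (intro divide_pos_pos mult_pos_pos) auto
qed

lemma hh_mono:
  assumes "2/5 \<le> x" "x < y" "y < 1/2"
  shows "hh x < hh y"
proof (rule DERIV_pos_imp_increasing[OF assms(2)])
  fix z assume z: "x \<le> z" "z \<le> y"
  then have "2/5 \<le> z" "z < 1/2" using assms by auto
  then show "\<exists>D. DERIV hh z :> D \<and> 0 < D"
    using hh_deriv hh_deriv_pos by (meson order.trans zero_le_divide_iff less_le_not_le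
        linorder_not_le zero_less_numeral divide_pos_pos)
qed

lemma hh_cont: "continuous_on {0.446538..0.446541} hh"
proof (rule continuous_at_imp_continuous_on, rule ballI)
  fix z assume "z \<in> {0.446538..0.446541::real}"
  then have "0 \<le> z" "z < 1/2" by auto
  from hh_deriv[OF this] show "isCont hh z" by (rule DERIV_isCont)
qed

theorem lemma4p5:
  shows "Phi3 6.74 (THE x. x \<in> {3/8..1/2} \<and> Psi 6.74 x = x) > 0"
proof -
  obtain x0 where x0: "0.446538 \<le> x0" "x0 \<le> 0.446541" "hh x0 = 0"
    using IVT'[of hh "0.446538" 0 "0.446541"] hh_a hh_b hh_cont by force
  have x0h: "0 \<le> x0" "x0 < 1/2" using x0 by auto
  have fx0: "Psi 6.74 x0 = x0" using fix_iff[OF x0h] x0 by simp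
  have uniq: "x = x0" if x: "x \<in> {3/8..1/2}" "Psi 6.74 x = x" for x
  proof -
    have "x \<noteq> 1/2"
    proof
      assume "x = 1/2"
      with x(2) not_half show False by simp
    qed
    then have xh: "0 \<le> x" "x < 1/2" using x by auto
    then have hx: "hh x = 0" using fix_iff x by blast
    have "2/5 < x"
    proof (rule ccontr)
      assume "\<not> 2/5 < x"
      then have "x \<le> 2/5" by simp
      then have "hh x < 0" using neg1 neg2 x by (cases "x \<le> 39/100") auto
      with hx show False by simp
    qed
    show "x = x0"
    proof (rule ccontr)
      assume "x \<noteq> x0"
      then consider "x < x0" | "x0 < x" by linarith
      then show False
      proof cases
        case 1 then have "hh x < hh x0" using hh_mono[of x x0] \<open>2/5 < x\<close> x0h by auto
        then show False using hx x0 by simp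
      next
        case 2 then have "hh x0 < hh x" using hh_mono[of x0 x] xh x0 by auto
        then show False using hx x0 by simp
      qed
    qed
  qed
  have the: "(THE x. x \<in> {3/8..1/2} \<and> Psi 6.74 x = x) = x0"
    by (rule the_equality) (use x0 fx0 uniq in auto)
  have c1: "6.74 * (2/3 - 1/6.74) = (262/75::real)" by simp
  have c2: "(6.74 - 1) = (287/50::real)" by simp
  have p1: "0 < 1 - x0" using x0h by simp
  have "x0^3 \<le> (1/2)^3" using x0h by (intro power_mono) auto
  then have p2: "0 < 1 - 2*x0^3" by (simp add: power_divide)
  have p3: "0 < 1 - x0^2" using sq_lt[OF x0h] by simp
  have "1 - x0 \<le> 1/(500000/276731)" using x0 by simp
  then have "ln (1 - x0) \<le> ln (1/(500000/276731::real))" using p1 by (subst ln_le_cancel_iff) auto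
  also have "\<dots> = - ln (500000/276731)" by (rule ln_recip) simp
  finally have B1: "ln (1 - x0) \<le> - 0.591562183" using ln_P1_lo by linarith
  have "0.446538^3 \<le> x0^3" using x0 by (intro power_mono) auto
  then have "1 - 2*x0^3 \<le> 1/(60832871/50000000)" by (simp add: power_divide)
  then have "ln (1 - 2*x0^3) \<le> ln (1/(60832871/50000000::real))" using p2 by (subst ln_le_cancel_iff) auto
  also have "\<dots> = - ln (60832871/50000000)" by (rule ln_recip) simp
  finally have B2: "ln (1 - 2*x0^3) \<le> - 0.196107278" using ln_P2_lo by linarith
  have "x0^2 \<le> 0.446541^2" using x0 x0h by (intro power_mono) auto
  then have "1/(3903317/3125000) \<le> 1 - x0^2" by (simp add: power_divide)
  then have "ln (1/(3903317/3125000::real)) \<le> ln (1 - x0^2)" using p3 by (subst ln_le_cancel_iff) auto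
  moreover have "ln (1/(3903317/3125000::real)) = - ln (3903317/3125000)" by (rule ln_recip) simp
  ultimately have B3: "- 0.222392422 \<le> ln (1 - x0^2)" using ln_P3_hi by linarith
  have "Phi3 6.74 x0 = - ln (1 - x0) - 262/75 * ln (1 - 2 * x0^3) + 287/50 * ln (1 - x0^2)"
    unfolding Phi3_def c1 c2 by simp
  also have "\<dots> > 0" using B1 B2 B3 by simp
  finally show ?thesis unfolding the by simp
qed

end
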